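(* Let $N\ge1$, $0=\tau_0<\cdots<\tau_N=1$, $\Delta_i=\tau_{i+1}-\tau_i$, $D_2=\sum_i\Delta_i^2$, $0<\omega<1/N$ and $\mathcal W_\omega=\{w\in\mathbb R^N:w_i\ge\omega\ \forall i,\ \sum_iw_i=1\}$. Fix $\varepsilon_a>0$, nonnegative weights $K_\sigma(i,\ell)$ with $\sum_\ell K_\sigma(i,\ell)=1$, numbers $\widehat{\mathcal A}_i\ge0$ and $\mathcal A_i\ge0$. Define $\widehat b_i=\sum_\ell K_\sigma(i,\ell)\sqrt{\widehat{\mathcal A}_\ell+\varepsilon_a}$, $\widehat\phi_i=\widehat b_i^2$, $\widehat w_i=\Delta_i\widehat b_i/\sum_\ell\Delta_\ell\widehat b_\ell$, $b_i^\star=\sum_\ell K_\sigma(i,\ell)\sqrt{\mathcal A_\ell+\varepsilon_a}$, $\phi_i^\star=(b_i^\star)^2$, and $\mathcal J_{\sigma,\varepsilon_a}(w)=\sum_i\phi_i^\star\Delta_i^2/w_i$. Assume $\widehat w\in\mathcal W_\omega$ and let $w^\star_{\sigma,\varepsilon_a}=\arg\min_{w\in\mathcal W_\omega}\mathcal J_{\sigma,\varepsilon_a}(w)$. If $\zeta\ge0$ and $\max_i|\widehat\phi_i-\phi_i^\star|\le\zeta$, then $$\mathcal J_{\sigma,\varepsilon_a}(\widehat w)\le\mathcal J_{\sigma,\varepsilon_a}(w^\star_{\sigma,\varepsilon_a})+\frac{2D_2}{\omega}\zeta.$$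
   Context: In the paper, $\widehat{\mathcal A}_i$ are empirical averages of interval-wise local-error coefficients over calibration trajectories and $\mathcal A_i$ their population means. *)

theory Defs
  imports "HOL-Analysis.Analysis"
begin

text \<open>Vectors in R^N are represented as functions nat => real, indices 0..N-1.\<close>

definition simplex_floor :: "nat \<Rightarrow> real \<Rightarrow> (nat \<Rightarrow> real) set" where
  "simplex_floor N \<omega> = {w. (\<forall>i<N. w i \<ge> \<omega>) \<and> (\<Sum>i<N. w i) = 1}"

definition Jobj :: "nat \<Rightarrow> (nat \<Rightarrow> real) \<Rightarrow> (nat \<Rightarrow> real) \<Rightarrow> (nat \<Rightarrow> real) \<Rightarrow> real" where
  "Jobj N \<phi> \<Delta> w = (\<Sum>i<N. \<phi> i * (\<Delta> i)\<^sup>2 / w i)"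

end

theory Submission
  imports Defs
begin

lemma perturb:
  assumes w: "w \<in> simplex_floor N \<omega>" and om: "\<omega> > 0"
    and cl: "\<And>i. i < N \<Longrightarrow> \<bar>\<phi> i - \<psi> i\<bar> \<le> \<zeta>"
  shows "Jobj N \<phi> \<Delta> w \<le> Jobj N \<psi> \<Delta> w + \<zeta> * (\<Sum>i<N. (\<Delta> i)\<^sup>2) / \<omega>"
proof -
  have "\<And>i. i < N \<Longrightarrow> \<phi> i * (\<Delta> i)\<^sup>2 / w i \<le> \<psi> i * (\<Delta> i)\<^sup>2 / w i + \<zeta> * (\<Delta> i)\<^sup>2 / \<omega>"
  proof -
    fix i assume i: "i < N"
    have wi: "w i \<ge> \<omega>" using w i by (auto simp: simplex_floor_def)
    have d: "(\<phi> i - \<psi> i) \<le> \<zeta>" using cl[OF i] by linarith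
    have z: "\<zeta> \<ge> 0" using cl[OF i] by linarith
    have "\<phi> i * (\<Delta> i)\<^sup>2 / w i - \<psi> i * (\<Delta> i)\<^sup>2 / w i = (\<phi> i - \<psi> i) * (\<Delta> i)\<^sup>2 / w i"
      by (simp add: diff_divide_distrib left_diff_distrib)
    also have "\<dots> \<le> \<zeta> * (\<Delta> i)\<^sup>2 / w i"
      using d wi om by (intro divide_right_mono mult_right_mono) auto
    also have "\<dots> \<le> \<zeta> * (\<Delta> i)\<^sup>2 / \<omega>"
      using wi om z by (intro divide_left_mono) auto
    finally show "\<phi> i * (\<Delta> i)\<^sup>2 / w i \<le> \<psi> i * (\<Delta> i)\<^sup>2 / w i + \<zeta> * (\<Delta> i)\<^sup>2 / \<omega>" by simp
  qed
  then have "Jobj N \<phi> \<Delta> w \<le> (\<Sum>i<N. \<psi> i * (\<Delta> i)\<^sup>2 / w i + \<zeta> * (\<Delta> i)\<^sup>2 / \<omega>)"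
    unfolding Jobj_def by (intro sum_mono) auto
  also have "\<dots> = Jobj N \<psi> \<Delta> w + \<zeta> * (\<Sum>i<N. (\<Delta> i)\<^sup>2) / \<omega>"
    unfolding Jobj_def by (simp add: sum.distrib sum_distrib_left sum_divide_distrib)
  finally show ?thesis .
qed

lemma cs:
  assumes wpos: "\<And>i. i < N \<Longrightarrow> w i > 0" and ws: "(\<Sum>i<N. w i) = (1::real)"
  shows "(\<Sum>i<N. a i)\<^sup>2 \<le> (\<Sum>i<N. (a i)\<^sup>2 / w i)"
proof -
  define S where "S = (\<Sum>i<N. a i)"
  have "\<And>i. i < N \<Longrightarrow> 2 * S * a i - S\<^sup>2 * w i \<le> (a i)\<^sup>2 / w i"
  proof -
    fix i assume i: "i < N"
    have p: "w i > 0" using wpos[OF i] .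
    have "0 \<le> (a i - S * w i)\<^sup>2 / w i" using p by simp
    also have "(a i - S * w i)\<^sup>2 / w i = (a i)\<^sup>2 / w i - (2 * S * a i - S\<^sup>2 * w i)"
      using p by (simp add: field_simps power2_eq_square)
    finally show "2 * S * a i - S\<^sup>2 * w i \<le> (a i)\<^sup>2 / w i" by simp
  qed
  then have "(\<Sum>i<N. 2 * S * a i - S\<^sup>2 * w i) \<le> (\<Sum>i<N. (a i)\<^sup>2 / w i)"
    by (intro sum_mono) auto
  moreover have "(\<Sum>i<N. 2 * S * a i - S\<^sup>2 * w i) = S\<^sup>2"
    using ws by (simp add: sum_subtractf sum_distrib_left[symmetric] S_def power2_eq_square)
  ultimately show ?thesis by (simp add: S_def)
qed

theorem lemma4:
  fixes N :: nat and \<tau> :: "nat \<Rightarrow> real" and \<omega> \<epsilon>a \<zeta> :: real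
    and K :: "nat \<Rightarrow> nat \<Rightarrow> real" and Ahat A :: "nat \<Rightarrow> real"
    and wstar :: "nat \<Rightarrow> real"
  assumes N: "N \<ge> 1"
    and tau0: "\<tau> 0 = 0" and tauN: "\<tau> N = 1"
    and tau_mono: "\<And>i. i < N \<Longrightarrow> \<tau> i < \<tau> (Suc i)"
    and om: "0 < \<omega>" "\<omega> < 1 / real N"
    and eps: "\<epsilon>a > 0"
    and K_nonneg: "\<And>i l. i < N \<Longrightarrow> l < N \<Longrightarrow> K i l \<ge> 0"
    and K_sum: "\<And>i. i < N \<Longrightarrow> (\<Sum>l<N. K i l) = 1"
    and Ahat_nonneg: "\<And>i. i < N \<Longrightarrow> Ahat i \<ge> 0"
    and A_nonneg: "\<And>i. i < N \<Longrightarrow> A i \<ge> 0"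
    and what_in: "(\<lambda>i. (\<tau> (Suc i) - \<tau> i) * (\<Sum>l<N. K i l * sqrt (Ahat l + \<epsilon>a))
                 / (\<Sum>l<N. (\<tau> (Suc l) - \<tau> l) * (\<Sum>m<N. K l m * sqrt (Ahat m + \<epsilon>a))))
                 \<in> simplex_floor N \<omega>"
    and wstar_in: "wstar \<in> simplex_floor N \<omega>"
    and wstar_min: "\<And>w. w \<in> simplex_floor N \<omega> \<Longrightarrow>
         Jobj N (\<lambda>i. (\<Sum>l<N. K i l * sqrt (A l + \<epsilon>a))\<^sup>2) (\<lambda>i. \<tau> (Suc i) - \<tau> i) wstar
         \<le> Jobj N (\<lambda>i. (\<Sum>l<N. K i l * sqrt (A l + \<epsilon>a))\<^sup>2) (\<lambda>i. \<tau> (Suc i) - \<tau> i) w"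
    and zeta: "\<zeta> \<ge> 0"
    and close: "\<And>i. i < N \<Longrightarrow>
         \<bar>(\<Sum>l<N. K i l * sqrt (Ahat l + \<epsilon>a))\<^sup>2 - (\<Sum>l<N. K i l * sqrt (A l + \<epsilon>a))\<^sup>2\<bar> \<le> \<zeta>"
  shows "Jobj N (\<lambda>i. (\<Sum>l<N. K i l * sqrt (A l + \<epsilon>a))\<^sup>2) (\<lambda>i. \<tau> (Suc i) - \<tau> i)
           (\<lambda>i. (\<tau> (Suc i) - \<tau> i) * (\<Sum>l<N. K i l * sqrt (Ahat l + \<epsilon>a))
                 / (\<Sum>l<N. (\<tau> (Suc l) - \<tau> l) * (\<Sum>m<N. K l m * sqrt (Ahat m + \<epsilon>a))))
         \<le> Jobj N (\<lambda>i. (\<Sum>l<N. K i l * sqrt (A l + \<epsilon>a))\<^sup>2) (\<lambda>i. \<tau> (Suc i) - \<tau> i) wstar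
           + 2 * (\<Sum>i<N. (\<tau> (Suc i) - \<tau> i)\<^sup>2) / \<omega> * \<zeta>"
proof -
  define b where "b i = (\<Sum>l<N. K i l * sqrt (Ahat l + \<epsilon>a))" for i
  define c where "c i = (\<Sum>l<N. K i l * sqrt (A l + \<epsilon>a))" for i
  define \<Delta> where "\<Delta> i = \<tau> (Suc i) - \<tau> i" for i
  define a where "a i = \<Delta> i * b i" for i
  define S where "S = (\<Sum>i<N. a i)"
  define wh where "wh i = a i / S" for i
  define D where "D = (\<Sum>i<N. (\<Delta> i)\<^sup>2)"
  have wh_in: "wh \<in> simplex_floor N \<omega>"
    using what_in unfolding wh_def a_def S_def b_def \<Delta>_def by simp
  have whpos: "\<And>i. i < N \<Longrightarrow> wh i > 0"
    using wh_in om by (auto simp: simplex_floor_def intro: less_le_trans)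
  have wspos: "\<And>i. i < N \<Longrightarrow> wstar i > 0"
    using wstar_in om by (auto simp: simplex_floor_def intro: less_le_trans)
  have wssum: "(\<Sum>i<N. wstar i) = 1" using wstar_in by (simp add: simplex_floor_def)
  have cl1: "\<And>i. i < N \<Longrightarrow> \<bar>(c i)\<^sup>2 - (b i)\<^sup>2\<bar> \<le> \<zeta>"
    using close unfolding b_def c_def by (simp add: abs_minus_commute)
  have cl2: "\<And>i. i < N \<Longrightarrow> \<bar>(b i)\<^sup>2 - (c i)\<^sup>2\<bar> \<le> \<zeta>"
    using close unfolding b_def c_def by simp
  have step1: "Jobj N (\<lambda>i. (c i)\<^sup>2) \<Delta> wh \<le> Jobj N (\<lambda>i. (b i)\<^sup>2) \<Delta> wh + \<zeta> * D / \<omega>"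
    unfolding D_def by (rule perturb[OF wh_in om(1) cl1])
  have step3: "Jobj N (\<lambda>i. (b i)\<^sup>2) \<Delta> wstar \<le> Jobj N (\<lambda>i. (c i)\<^sup>2) \<Delta> wstar + \<zeta> * D / \<omega>"
    unfolding D_def by (rule perturb[OF wstar_in om(1) cl2])
  have Snz: "S \<noteq> 0"
  proof
    assume "S = 0"
    then have "wh 0 = 0" by (simp add: wh_def)
    with whpos[of 0] N show False by simp
  qed
  have anz: "\<And>i. i < N \<Longrightarrow> a i \<noteq> 0"
    using whpos by (fastforce simp: wh_def)
  have "Jobj N (\<lambda>i. (b i)\<^sup>2) \<Delta> wh = (\<Sum>i<N. a i * S)"
    unfolding Jobj_def
  proof (rule sum.cong[OF refl])
    fix i assume "i \<in> {..<N}"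
    then have "a i \<noteq> 0" using anz by simp
    then show "(b i)\<^sup>2 * (\<Delta> i)\<^sup>2 / wh i = a i * S"
      using Snz by (simp add: wh_def a_def field_simps power2_eq_square)
  qed
  also have "\<dots> = S\<^sup>2" by (simp add: S_def sum_distrib_right power2_eq_square)
  also have "\<dots> \<le> (\<Sum>i<N. (a i)\<^sup>2 / wstar i)"
    unfolding S_def by (rule cs[OF wspos wssum])
  also have "\<dots> = Jobj N (\<lambda>i. (b i)\<^sup>2) \<Delta> wstar"
    unfolding Jobj_def a_def by (simp add: power_mult_distrib mult.commute)
  finally have step2: "Jobj N (\<lambda>i. (b i)\<^sup>2) \<Delta> wh \<le> Jobj N (\<lambda>i. (b i)\<^sup>2) \<Delta> wstar" .
  have "Jobj N (\<lambda>i. (c i)\<^sup>2) \<Delta> wh \<le> Jobj N (\<lambda>i. (c i)\<^sup>2) \<Delta> wstar + 2 * D / \<omega> * \<zeta>"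
  proof -
    have "2 * D / \<omega> * \<zeta> = \<zeta> * D / \<omega> + \<zeta> * D / \<omega>" by (simp add: field_simps)
    then show ?thesis using step1 step2 step3 by linarith
  qed
  then show ?thesis
    unfolding c_def \<Delta>_def D_def wh_def a_def S_def b_def by simp
qed

end
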